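(* Let $k\ge 100$ be an integer and let the roots of $f_k(X)=X^k-X^{k-1}-\cdots-X-1$ be $\alpha_1,\ldots,\alpha_{k-1},\alpha_k$, where $\alpha_k$ is the unique real root greater than $1$. Then for all distinct $i,j\in\{1,\ldots,k-1\}$, $$\frac{k^2}{13000\,e^3}<|\alpha_i-\alpha_j|^2\prod_{\substack{1\le \ell\le k-1\\ \ell\ne i,j}}|\alpha_i-\alpha_\ell|\,|\alpha_j-\alpha_\ell|.$$
   Context: $f_k(X)=X^k-X^{k-1}-\cdots-X-1$ has exactly one root outside the closed unit disk, denoted $\alpha_k$, which is real and larger than $1$; the other roots $\alpha_1,\ldots,\alpha_{k-1}$ have absolute value less than $1$, and all roots are distinct. *)

theory Defs
  imports "HOL-Analysis.Analysis" "HOL-Computational_Algebra.Polynomial"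
begin

definition fk :: "nat \<Rightarrow> complex poly" where
  "fk k = monom 1 k - (\<Sum>i<k. monom 1 i)"

text \<open>The roots alpha_1, ..., alpha_(k-1): the roots of f_k other than the dominant real
root alpha_k, i.e. the roots inside the open unit disk.\<close>
definition small_roots :: "nat \<Rightarrow> complex set" where
  "small_roots k = {z. poly (fk k) z = 0 \<and> cmod z < 1}"

end

theory Submission
  imports Defs "HOL-Computational_Algebra.Fundamental_Theorem_Algebra"
begin

lemma poly_fk: "poly (fk k) x = x ^ k - (\<Sum>i<k. x ^ i)"
  by (simp add: fk_def poly_sum poly_monom)

lemma g_ident: "(x - 1) * poly (fk k) x = x ^ (k+1) - 2 * x ^ k + 1"
proof -
  have "(x - 1) * (\<Sum>i<k. x ^ i) = x ^ k - 1" using power_diff_1_eq[of x k] by simp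
  then show ?thesis by (simp add: poly_fk algebra_simps)
qed

definition G :: "nat \<Rightarrow> complex poly" where
  "G k = monom 1 (k+1) - smult 2 (monom 1 k) + 1"

lemma G_eq: "[:-1, 1:] * fk k = G k"
proof (rule poly_ext)
  fix x :: complex
  show "poly ([:-1, 1:] * fk k) x = poly (G k) x"
    using g_ident[of x k] by (simp add: G_def poly_monom algebra_simps)
qed

lemma deriv_root:
  assumes "poly (fk k) a = 0" "k \<ge> 1"
  shows "(a - 1) * poly (pderiv (fk k)) a = a ^ (k - 1) * ((k+1) * a - 2 * k)"
proof -
  have "pderiv ([:-1, 1:] * fk k) = pderiv (G k)" using G_eq[of k] by (rule arg_cong)
  hence A: "poly (pderiv ([:-1, 1:] * fk k)) a = poly (pderiv (G k)) a" by simp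
  have B: "poly (pderiv ([:-1, 1:] * fk k)) a = (a - 1) * poly (pderiv (fk k)) a"
    unfolding pderiv_mult using assms(1) by (simp add: pderiv_pCons algebra_simps)
  have C: "poly (pderiv (G k)) a = (k+1) * a ^ k - 2 * k * a ^ (k - 1)"
    by (simp add: G_def pderiv_diff pderiv_add pderiv_smult pderiv_monom poly_monom)
  have D: "a ^ k = a ^ (k - 1) * a" using assms(2)
    by (metis Suc_diff_1 le_less_trans less_one linorder_not_le power_Suc2)
  have "(a - 1) * poly (pderiv (fk k)) a = (k+1) * a ^ k - 2 * k * a ^ (k - 1)"
    using A B C by metis
  then show ?thesis using D by (simp add: algebra_simps)
qed

lemma root_eq:
  assumes "poly (fk k) a = 0"
  shows "a ^ k * (a - 2) = -1"
  using g_ident[of a k] assms by (simp add: algebra_simps)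

lemma small_deriv:
  assumes "poly (fk k) a = 0" "cmod a < 1" "k \<ge> 2"
  shows "cmod (poly (pderiv (fk k)) a) \<ge> (real k - 1) / 6"
proof -
  have e: "(a - 1) * poly (pderiv (fk k)) a = a ^ (k - 1) * ((k+1) * a - 2 * k)"
    using deriv_root[OF assms(1)] assms(3) by simp
  have "cmod a ^ k * cmod (a - 2) = 1" using root_eq[OF assms(1)]
    by (metis norm_minus_cancel norm_mult norm_one norm_power)
  moreover have "cmod (a - 2) \<le> 3" using norm_triangle_ineq4[of a 2] assms(2) by simp
  moreover have "cmod a ^ k * cmod (a - 2) \<le> cmod a ^ k * 3"
    using \<open>cmod (a - 2) \<le> 3\<close> by (intro mult_left_mono) auto
  ultimately have h1: "cmod a ^ k \<ge> 1/3" by linarith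
  have "cmod a ^ k \<le> cmod a ^ (k - 1)"
    using power_decreasing[of "k-1" k "cmod a"] assms by simp
  hence h2: "cmod (a ^ (k-1)) \<ge> 1/3" using h1 by (simp add: norm_power)
  have "cmod ((k+1) * a) = real (k+1) * cmod a" by (metis norm_mult norm_of_nat)
  also have "\<dots> \<le> real (k+1) * 1" using assms(2) by (intro mult_left_mono) auto
  finally have "cmod ((k+1) * a) \<le> real k + 1" by simp
  moreover have "cmod (2 * (of_nat k :: complex)) = 2 * real k" by (simp add: norm_mult)
  moreover have "cmod (2 * (of_nat k :: complex)) - cmod ((k+1) * a) \<le> cmod ((k+1) * a - 2 * k)"
    using norm_triangle_ineq3[of "2 * (of_nat k :: complex)" "(k+1) * a"] by (simp add: norm_minus_commute)
  ultimately have h3: "cmod ((k+1) * a - 2 * k) \<ge> real k - 1" by linarith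
  have h4: "cmod (a - 1) \<le> 2" using norm_triangle_ineq4[of a 1] assms(2) by simp
  have "cmod (a - 1) * cmod (poly (pderiv (fk k)) a) = cmod (a ^ (k-1)) * cmod ((k+1) * a - 2 * k)"
    using e by (metis norm_mult)
  also have "\<dots> \<ge> 1/3 * (real k - 1)" using h2 h3 assms(3)
    by (intro mult_mono) auto
  finally have "cmod (a - 1) * cmod (poly (pderiv (fk k)) a) \<ge> (real k - 1) / 3" by simp
  moreover have "cmod (a - 1) * cmod (poly (pderiv (fk k)) a) \<le> 2 * cmod (poly (pderiv (fk k)) a)"
    using h4 by (intro mult_right_mono) auto
  ultimately show ?thesis by simp
qed

lemma big_root:
  assumes "poly (fk k) z = 0" "cmod z \<ge> 1" "k \<ge> 100"
  shows "cmod z \<ge> 9/5"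
proof (rule ccontr)
  assume nb: "\<not> cmod z \<ge> 9/5"
  have "cmod z ^ k * cmod (2 - z) = 1" using root_eq[OF assms(1)]
    by (metis minus_diff_eq norm_minus_cancel norm_mult norm_one norm_power)
  moreover have "cmod (2 - z) \<ge> 2 - cmod z" using norm_triangle_ineq2[of 2 z] by simp
  moreover have "cmod z ^ k * (2 - cmod z) \<le> cmod z ^ k * cmod (2 - z)"
    using \<open>cmod (2 - z) \<ge> 2 - cmod z\<close> by (intro mult_left_mono) auto
  ultimately have le: "cmod z ^ k * (2 - cmod z) \<le> 1" by linarith
  show False
  proof (cases "cmod z = 1")
    case True
    then have "cmod (2 - z) = 1" using \<open>cmod z ^ k * cmod (2 - z) = 1\<close> by simp
    with True have "Re z ^ 2 + Im z ^ 2 = 1" "(2 - Re z) ^ 2 + Im z ^ 2 = 1"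
      by (simp_all add: cmod_def)
    moreover have "(2 - Re z) ^ 2 = 4 - 4 * Re z + Re z ^ 2" by (simp add: power2_eq_square algebra_simps)
    ultimately have r1: "Re z = 1" by linarith
    hence "Im z ^ 2 = 0" using \<open>Re z ^ 2 + Im z ^ 2 = 1\<close> by simp
    hence "Re z = 1" "Im z = 0" using r1 by auto
    hence "z = 1" by (simp add: complex_eq_iff)
    with assms(1) assms(3) show False by (simp add: poly_fk)
  next
    case False
    define e where "e = cmod z - 1"
    have e0: "e > 0" "e < 4/5" using False assms(2) nb by (auto simp: e_def)
    have "(1 + e) ^ k \<ge> 1 + real k * e" using e0 by (intro Bernoulli_inequality) auto
    hence "(1 + e) ^ k * (1 - e) \<ge> (1 + real k * e) * (1 - e)"
      using e0 by (intro mult_right_mono) auto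
    moreover have "(1 + real k * e) * (1 - e) > 1"
    proof -
      have "(1 + real k * e) * (1 - e) - 1 = e * (real k - 1 - real k * e)" by (simp add: algebra_simps)
      have "real k * e \<le> real k * (4/5)" using e0 by (intro mult_left_mono) auto
      moreover have "real k \<ge> 100" using assms(3) by simp
      ultimately have "real k - 1 - real k * e > 0" by linarith
      hence "e * (real k - 1 - real k * e) > 0" using e0 by simp
      thus ?thesis using \<open>(1 + real k * e) * (1 - e) - 1 = _\<close> by linarith
    qed
    moreover have "cmod z ^ k * (2 - cmod z) = (1+e)^k*(1-e)" by (simp add: e_def)
    ultimately show False using le by linarith
  qed
qed

lemma small_pow:
  assumes "poly (fk k) a = 0" "cmod a < 1"
  shows "cmod a ^ k \<ge> 1/3"
proof -
  have "cmod a ^ k * cmod (a - 2) = 1" using root_eq[OF assms(1)]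
    by (metis norm_minus_cancel norm_mult norm_one norm_power)
  moreover have "cmod (a - 2) \<le> 3" using norm_triangle_ineq4[of a 2] assms(2) by simp
  moreover have "cmod a ^ k * cmod (a - 2) \<le> cmod a ^ k * 3"
    using \<open>cmod (a - 2) \<le> 3\<close> by (intro mult_left_mono) auto
  ultimately show "cmod a ^ k \<ge> 1/3" by linarith
qed

lemma coeff_fk: "coeff (fk k) n = (if n = k then 1 else if n < k then -1 else 0)"
  by (simp add: fk_def coeff_sum coeff_monom sum.delta)

lemma degree_fk: "degree (fk k) = k"
proof (rule antisym)
  show "degree (fk k) \<le> k" by (rule degree_le) (simp add: coeff_fk)
  show "k \<le> degree (fk k)" by (rule le_degree) (simp add: coeff_fk)
qed

lemma lead_fk: "lead_coeff (fk k) = 1"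
  by (simp add: degree_fk coeff_fk)

lemma fk_nz: "fk k \<noteq> 0"
  using lead_fk[of k] by auto

lemma fk_0: "k \<ge> 1 \<Longrightarrow> poly (fk k) 0 = -1"
  by (simp add: poly_fk power_0_left sum.delta)

lemma simple_small:
  assumes "poly (fk k) a = 0" "cmod a < 1" "k \<ge> 2"
  shows "order a (fk k) = 1"
proof -
  have "cmod (poly (pderiv (fk k)) a) \<ge> (real k - 1) / 6" by (rule small_deriv[OF assms])
  moreover have "(real k - 1) / 6 > 0" using assms(3) by simp
  ultimately have nz: "poly (pderiv (fk k)) a \<noteq> 0" by auto
  hence "pderiv (fk k) \<noteq> 0" by auto
  have "order a (fk k) = Suc (order a (pderiv (fk k)))"
    by (rule order_pderiv[OF fk_nz assms(1)])
  moreover have "order a (pderiv (fk k)) = 0" using nz order_root by blast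
  ultimately show ?thesis by simp
qed

lemma key:
  assumes k: "k \<ge> 100" and aS: "a \<in> small_roots k"
  shows "(\<Prod>z \<in> small_roots k - {a}. cmod (a - z)) \<ge> (real k - 1) / 24"
proof -
  define p where "p = fk k"
  define R where "R = {z. poly p z = 0}"
  define S where "S = small_roots k"
  define B where "B = R - S"
  define om where "om = (\<lambda>z. order z p)"
  have pnz: "p \<noteq> 0" by (simp add: p_def fk_nz)
  have finR: "finite R" unfolding R_def using poly_roots_finite[OF pnz] .
  have SR: "S \<subseteq> R" by (auto simp: S_def R_def p_def small_roots_def)
  have finS: "finite S" using finR SR finite_subset by blast
  have finB: "finite B" using finR by (simp add: B_def)
  have omS: "om z = 1" if "z \<in> S" for z
    using that k simple_small[of k z] by (auto simp: S_def small_roots_def om_def p_def)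
  have omB: "om z \<ge> 1" if "z \<in> B" for z
    using that pnz order_root[of p z] by (auto simp: B_def R_def om_def)
  have bigB: "cmod z \<ge> 9/5" if "z \<in> B" for z
    using that k big_root[of k z] by (auto simp: B_def R_def S_def small_roots_def p_def)
  have D: "(\<Prod>z\<in>R. [:-z, 1:] ^ om z) = p"
    using complex_poly_decompose[of p] by (simp add: p_def lead_fk R_def om_def)
  have "poly (\<Prod>z\<in>R. [:-z, 1:] ^ om z) 0 = (\<Prod>z\<in>R. (- z) ^ om z)"
    by (simp add: poly_prod)
  hence "(\<Prod>z\<in>R. (- z) ^ om z) = -1" using D fk_0[of k] k by (simp add: p_def)
  hence "cmod (\<Prod>z\<in>R. (- z) ^ om z) = 1" by simp
  hence allR: "(\<Prod>z\<in>R. cmod z ^ om z) = 1" by (simp add: prod_norm[symmetric] norm_power)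
  have splitR: "(\<Prod>z\<in>R. cmod z ^ om z) = (\<Prod>z\<in>B. cmod z ^ om z) * (\<Prod>z\<in>S. cmod z ^ om z)"
    unfolding B_def using prod.subset_diff[OF SR finR] .
  have PS_eq: "(\<Prod>z\<in>S. cmod z ^ om z) = (\<Prod>z\<in>S. cmod z)"
    using omS by (intro prod.cong) auto
  have "card S \<le> k"
  proof -
    have "card S \<le> card R" using card_mono[OF finR SR] .
    also have "\<dots> \<le> degree p" unfolding R_def by (rule card_poly_roots_bound[OF pnz])
    finally show ?thesis by (simp add: p_def degree_fk)
  qed
  have "(\<Prod>z\<in>S. cmod z) ^ k = (\<Prod>z\<in>S. cmod z ^ k)" by (rule prod_power_distrib)
  also have "\<dots> \<ge> (\<Prod>z\<in>S. (1/3::real))"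
  proof (rule prod_mono)
    fix z assume "z \<in> S"
    hence "cmod z ^ k \<ge> 1/3" using small_pow unfolding S_def small_roots_def by blast
    thus "0 \<le> (1/3::real) \<and> 1/3 \<le> cmod z ^ k" by simp
  qed
  finally have "(\<Prod>z\<in>S. cmod z) ^ k \<ge> (1/3) ^ card S" by simp
  moreover have "(1/3::real) ^ card S \<ge> (1/3) ^ k"
    using \<open>card S \<le> k\<close> by (intro power_decreasing) auto
  ultimately have h3: "(1/3::real) ^ k \<le> (\<Prod>z\<in>S. cmod z) ^ k" by linarith
  have "Suc (k - 1) = k" using k by simp
  hence "(1/3::real) ^ Suc (k - 1) \<le> (\<Prod>z\<in>S. cmod z) ^ Suc (k - 1)"
    using h3 by simp
  hence PS: "(\<Prod>z\<in>S. cmod z) \<ge> 1/3"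
    by (rule power_le_imp_le_base) (simp add: prod_nonneg)
  have PB: "(\<Prod>z\<in>B. cmod z ^ om z) \<le> 3"
  proof -
    define x where "x = (\<Prod>z\<in>B. cmod z ^ om z)"
    define y where "y = (\<Prod>z\<in>S. cmod z)"
    have "x * y = 1" using allR splitR PS_eq by (simp add: x_def y_def)
    moreover have "x \<ge> 0" by (simp add: x_def prod_nonneg)
    moreover have "x * (1/3) \<le> x * y" using PS \<open>x \<ge> 0\<close> by (intro mult_left_mono) (auto simp: y_def)
    ultimately show ?thesis by (simp add: x_def)
  qed
  have sumB: "(\<Sum>z\<in>B. om z) \<le> 1"
  proof (rule ccontr)
    assume "\<not> ?thesis"
    hence "(9/5::real) ^ 2 \<le> (9/5) ^ (\<Sum>z\<in>B. om z)" by (intro power_increasing) auto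
    also have "\<dots> = (\<Prod>z\<in>B. (9/5) ^ om z)" by (rule power_sum)
    also have "\<dots> \<le> (\<Prod>z\<in>B. cmod z ^ om z)"
      by (intro prod_mono conjI power_mono) (auto dest: bigB)
    finally have "(9/5::real) ^ 2 \<le> 3" using PB by linarith
    thus False by (simp add: power2_eq_square)
  qed
  have cardB: "card B \<le> 1"
  proof -
    have "card B = (\<Sum>z\<in>B. 1)" by simp
    also have "\<dots> \<le> (\<Sum>z\<in>B. om z)" using omB by (intro sum_mono) auto
    finally show ?thesis using sumB by simp
  qed
  have HB: "cmod (\<Prod>z\<in>B. (a - z) ^ om z) \<le> 4"
  proof (cases "B = {}")
    case True then show ?thesis by simp
  next
    case False
    have "card B \<noteq> 0" using False finB by simp
    with cardB have "card B = 1" by linarith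
    then obtain w where Bw: "B = {w}" by (rule card_1_singletonE)
    have "om w \<le> 1" using sumB Bw by simp
    moreover have "om w \<ge> 1" using omB Bw by simp
    ultimately have ow: "om w = 1" by simp
    have "cmod w \<le> 3" using PB Bw ow by simp
    moreover have "cmod a < 1" using aS by (simp add: small_roots_def)
    moreover have "cmod (a - w) \<le> cmod a + cmod w" by (rule norm_triangle_ineq4)
    ultimately show ?thesis using Bw ow by simp
  qed
  have aR: "a \<in> R" and aSS: "a \<in> S" using aS SR by (auto simp: S_def)
  define Q where "Q = (\<Prod>z\<in>R - {a}. [:-z, 1:] ^ om z)"
  have "p = [:-a, 1:] ^ om a * Q" unfolding Q_def using D prod.remove[OF finR aR, of "\<lambda>z. [:-z, 1:] ^ om z"] by simp
  hence pQ: "p = [:-a, 1:] * Q" using omS[OF aSS] by simp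
  have "poly (pderiv p) a = poly (pderiv ([:-a, 1:] * Q)) a" using pQ by simp
  also have "\<dots> = poly Q a" unfolding pderiv_mult by (simp add: pderiv_pCons)
  finally have dQ: "poly (pderiv p) a = poly Q a" .
  have "poly Q a = (\<Prod>z\<in>R - {a}. (a - z) ^ om z)" by (simp add: Q_def poly_prod)
  also have "\<dots> = (\<Prod>z\<in>(R - {a}) - (S - {a}). (a - z) ^ om z) * (\<Prod>z\<in>S - {a}. (a - z) ^ om z)"
    by (rule prod.subset_diff) (use SR finR in auto)
  also have "(R - {a}) - (S - {a}) = B" using aSS by (auto simp: B_def)
  also have "(\<Prod>z\<in>S - {a}. (a - z) ^ om z) = (\<Prod>z\<in>S - {a}. (a - z))"
    using omS by (intro prod.cong) auto
  finally have "cmod (poly Q a) = cmod (\<Prod>z\<in>B. (a - z) ^ om z) * (\<Prod>z\<in>S - {a}. cmod (a - z))"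
    by (simp add: norm_mult prod_norm)
  moreover have "cmod (poly (pderiv p) a) \<ge> (real k - 1) / 6"
    using small_deriv[of k a] aS k by (simp add: p_def small_roots_def)
  moreover have "cmod (\<Prod>z\<in>B. (a - z) ^ om z) * (\<Prod>z\<in>S - {a}. cmod (a - z))
      \<le> 4 * (\<Prod>z\<in>S - {a}. cmod (a - z))"
    using HB by (intro mult_right_mono) (auto simp: prod_nonneg)
  ultimately show ?thesis using dQ by (simp add: S_def)
qed

theorem mainTheorem5:
  fixes k :: nat and a b :: complex
  assumes "k \<ge> 100"
    and "a \<in> small_roots k" and "b \<in> small_roots k" and "a \<noteq> b"
  shows "real k ^ 2 / (13000 * exp 3) <
    cmod (a - b) ^ 2 * (\<Prod>c \<in> small_roots k - {a, b}. cmod (a - c) * cmod (b - c))"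
proof -
  define S where "S = small_roots k"
  have finS: "finite S"
  proof -
    have "S \<subseteq> {z. poly (fk k) z = 0}" by (auto simp: S_def small_roots_def)
    thus ?thesis using poly_roots_finite[OF fk_nz] finite_subset by blast
  qed
  have bSa: "b \<in> S - {a}" and aSb: "a \<in> S - {b}" using assms by (auto simp: S_def)
  have e1: "(\<Prod>z\<in>S - {a}. cmod (a - z)) = cmod (a - b) * (\<Prod>z\<in>S - {a, b}. cmod (a - z))"
    using prod.remove[OF _ bSa, of "\<lambda>z. cmod (a - z)"] finS
    by (simp add: Diff_insert2[symmetric] insert_commute)
  have e2: "(\<Prod>z\<in>S - {b}. cmod (b - z)) = cmod (a - b) * (\<Prod>z\<in>S - {a, b}. cmod (b - z))"
    using prod.remove[OF _ aSb, of "\<lambda>z. cmod (b - z)"] finS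
    by (simp add: Diff_insert2[symmetric] norm_minus_commute insert_commute)
  have "cmod (a - b) ^ 2 * (\<Prod>c \<in> S - {a, b}. cmod (a - c) * cmod (b - c))
      = (\<Prod>z\<in>S - {a}. cmod (a - z)) * (\<Prod>z\<in>S - {b}. cmod (b - z))"
    unfolding e1 e2 prod.distrib by (simp add: power2_eq_square mult_ac)
  moreover have ka: "(\<Prod>z\<in>S - {a}. cmod (a - z)) \<ge> (real k - 1) / 24"
    using key[OF assms(1) assms(2)] by (simp add: S_def)
  moreover have kb: "(\<Prod>z\<in>S - {b}. cmod (b - z)) \<ge> (real k - 1) / 24"
    using key[OF assms(1) assms(3)] by (simp add: S_def)
  moreover have "((real k - 1) / 24) * ((real k - 1) / 24) \<le>
      (\<Prod>z\<in>S - {a}. cmod (a - z)) * (\<Prod>z\<in>S - {b}. cmod (b - z))"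
    using ka kb assms(1) by (intro mult_mono) auto
  moreover have "real k ^ 2 / (13000 * exp 3) < ((real k - 1) / 24) * ((real k - 1) / 24)"
  proof -
    have ek: "real k \<ge> 100" using assms(1) by simp
    have "exp (3::real) \<ge> 1" by simp
    hence "real k ^ 2 / (13000 * exp 3) \<le> real k ^ 2 / 13000"
      by (intro divide_left_mono) auto
    also have "\<dots> = (real k * real k) / 13000" by (simp add: power2_eq_square)
    also have "\<dots> < (real k * real k) / 2304"
      using ek by (intro divide_strict_left_mono) auto
    also have "\<dots> = (real k / 48) * (real k / 48)" by simp
    also have "\<dots> \<le> ((real k - 1) / 24) * ((real k - 1) / 24)"
      using ek by (intro mult_mono) auto
    finally show ?thesis .
  qed
  ultimately show ?thesis by (simp add: S_def)
qed

end
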